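(* Let $G$ be a countable disconnected graph. Suppose there is an infinite sequence $(H_n)_{n<\omega}$ of pairwise distinct non-trivial connected components of $G$ such that $H_n$ embeds into $H_m$ whenever $n\le m$. Then $G$ has infinitely many pairwise non-isomorphic disconnected siblings.
   Context: Graphs are undirected and loopless. $G$ embeds into $G'$ if $G$ is isomorphic to an induced subgraph of $G'$; $G,G'$ are equimorphic if each embeds into the other; a sibling of $G$ is a graph equimorphic to $G$. A connected component is trivial if it consists of a single vertex. *)

theory Defs
  imports Main "HOL-Library.Countable_Set"
begin

definition graph :: "'a set \<Rightarrow> ('a \<Rightarrow> 'a \<Rightarrow> bool) \<Rightarrow> bool" where
  "graph V E \<longleftrightarrow> (\<forall>x y. E x y \<longrightarrow> x \<in> V \<and> y \<in> V) \<and> (\<forall>x y. E x y \<longrightarrow> E y x) \<and> (\<forall>x. \<not> E x x)"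

definition embeds :: "'a set \<Rightarrow> ('a \<Rightarrow> 'a \<Rightarrow> bool) \<Rightarrow> 'b set \<Rightarrow> ('b \<Rightarrow> 'b \<Rightarrow> bool) \<Rightarrow> bool" where
  "embeds V E V' E' \<longleftrightarrow> (\<exists>f. inj_on f V \<and> f ` V \<subseteq> V' \<and>
      (\<forall>x\<in>V. \<forall>y\<in>V. E' (f x) (f y) \<longleftrightarrow> E x y))"

definition isomorphic :: "'a set \<Rightarrow> ('a \<Rightarrow> 'a \<Rightarrow> bool) \<Rightarrow> 'b set \<Rightarrow> ('b \<Rightarrow> 'b \<Rightarrow> bool) \<Rightarrow> bool" where
  "isomorphic V E V' E' \<longleftrightarrow> (\<exists>f. bij_betw f V V' \<and>
      (\<forall>x\<in>V. \<forall>y\<in>V. E' (f x) (f y) \<longleftrightarrow> E x y))"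

definition equimorphic :: "'a set \<Rightarrow> ('a \<Rightarrow> 'a \<Rightarrow> bool) \<Rightarrow> 'b set \<Rightarrow> ('b \<Rightarrow> 'b \<Rightarrow> bool) \<Rightarrow> bool" where
  "equimorphic V E V' E' \<longleftrightarrow> embeds V E V' E' \<and> embeds V' E' V E"

definition component :: "'a set \<Rightarrow> ('a \<Rightarrow> 'a \<Rightarrow> bool) \<Rightarrow> 'a set \<Rightarrow> bool" where
  "component V E C \<longleftrightarrow> (\<exists>x\<in>V. C = {y. E\<^sup>*\<^sup>* x y})"

definition disconnected :: "'a set \<Rightarrow> ('a \<Rightarrow> 'a \<Rightarrow> bool) \<Rightarrow> bool" where
  "disconnected V E \<longleftrightarrow> (\<exists>x\<in>V. \<exists>y\<in>V. \<not> E\<^sup>*\<^sup>* x y)"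

definition trivial_set :: "'a set \<Rightarrow> bool" where
  "trivial_set C \<longleftrightarrow> (\<exists>v. C = {v})"

end

theory Submission
  imports Defs
begin

lemma iso_card:
  assumes "isomorphic A EA B EB"
  shows "card {v\<in>A. \<forall>w\<in>A. \<not> EA v w} = card {v\<in>B. \<forall>w\<in>B. \<not> EB v w}"
proof -
  obtain f where bf: "bij_betw f A B" and ef: "\<forall>x\<in>A. \<forall>y\<in>A. EB (f x) (f y) \<longleftrightarrow> EA x y"
    using assms unfolding isomorphic_def by blast
  have img: "f ` {v\<in>A. \<forall>w\<in>A. \<not> EA v w} = {v\<in>B. \<forall>w\<in>B. \<not> EB v w}"
  proof
    show "f ` {v\<in>A. \<forall>w\<in>A. \<not> EA v w} \<subseteq> {v\<in>B. \<forall>w\<in>B. \<not> EB v w}"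
    proof
      fix b assume "b \<in> f ` {v\<in>A. \<forall>w\<in>A. \<not> EA v w}"
      then obtain v where v: "v \<in> A" "\<forall>w\<in>A. \<not> EA v w" "b = f v" by blast
      have "\<forall>w\<in>B. \<not> EB b w"
      proof
        fix w assume "w \<in> B"
        then obtain u where "u \<in> A" "w = f u" using bf unfolding bij_betw_def by blast
        then show "\<not> EB b w" using v ef by blast
      qed
      moreover have "b \<in> B" using v bf unfolding bij_betw_def by blast
      ultimately show "b \<in> {v\<in>B. \<forall>w\<in>B. \<not> EB v w}" by blast
    qed
  next
    show "{v\<in>B. \<forall>w\<in>B. \<not> EB v w} \<subseteq> f ` {v\<in>A. \<forall>w\<in>A. \<not> EA v w}"
    proof
      fix b assume b: "b \<in> {v\<in>B. \<forall>w\<in>B. \<not> EB v w}"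
      then obtain v where v: "v \<in> A" "b = f v" using bf unfolding bij_betw_def by blast
      have "\<forall>w\<in>A. \<not> EA v w"
      proof
        fix w assume "w \<in> A"
        then have "f w \<in> B" using bf unfolding bij_betw_def by blast
        then show "\<not> EA v w" using b v ef \<open>w \<in> A\<close> by blast
      qed
      then show "b \<in> f ` {v\<in>A. \<forall>w\<in>A. \<not> EA v w}" using v by blast
    qed
  qed
  have "inj_on f A" using bf unfolding bij_betw_def by blast
  then have "inj_on f {v\<in>A. \<forall>w\<in>A. \<not> EA v w}"
    by (rule inj_on_subset) blast
  then have "card (f ` {v\<in>A. \<forall>w\<in>A. \<not> EA v w}) = card {v\<in>A. \<forall>w\<in>A. \<not> EA v w}"
    by (rule card_image)
  then show ?thesis using img by simp
qed

locale sibctx =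
  fixes V :: "'a set" and E :: "'a \<Rightarrow> 'a \<Rightarrow> bool" and H :: "nat \<Rightarrow> 'a set"
  assumes gr: "graph V E" and cV: "countable V" and injH: "inj H"
    and compH: "\<And>n. component V E (H n)" and ntH: "\<And>n. \<not> trivial_set (H n)"
    and embH: "\<And>n m. n \<le> m \<Longrightarrow> embeds (H n) E (H m) E"
begin

lemma sym: "E x y \<Longrightarrow> E y x" using gr unfolding graph_def by blast
lemma irr: "\<not> E x x" using gr unfolding graph_def by blast
lemma inV: "E x y \<Longrightarrow> x \<in> V \<and> y \<in> V" using gr unfolding graph_def by blast

lemma rt_sym: "E\<^sup>*\<^sup>* x y \<Longrightarrow> E\<^sup>*\<^sup>* y x"
  by (induction rule: rtranclp_induct) (auto intro: converse_rtranclp_into_rtranclp sym)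

lemma H_def: "\<exists>x\<in>V. H n = {y. E\<^sup>*\<^sup>* x y}" using compH unfolding component_def by blast

lemma H_closed: "v \<in> H n \<Longrightarrow> E\<^sup>*\<^sup>* v w \<Longrightarrow> w \<in> H n"
proof -
  assume a: "v \<in> H n" "E\<^sup>*\<^sup>* v w"
  obtain x where x: "H n = {y. E\<^sup>*\<^sup>* x y}" using H_def by blast
  then have "E\<^sup>*\<^sup>* x v" using a by blast
  then have "E\<^sup>*\<^sup>* x w" using a(2) by (rule rtranclp_trans)
  then show ?thesis using x by blast
qed

lemma H_edge: "v \<in> H n \<Longrightarrow> E v w \<Longrightarrow> w \<in> H n"
  using H_closed by blast

lemma H_edge2: "v \<in> H n \<Longrightarrow> E w v \<Longrightarrow> w \<in> H n"
  using H_edge sym by blast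

lemma H_V: "H n \<subseteq> V"
proof
  fix y assume "y \<in> H n"
  obtain x where x: "x \<in> V" "H n = {y. E\<^sup>*\<^sup>* x y}" using H_def by blast
  then have "E\<^sup>*\<^sup>* x y" using \<open>y \<in> H n\<close> by blast
  then show "y \<in> V"
    by (cases rule: rtranclp.cases) (use x inV in auto)
qed

lemma H_disj: assumes "n \<noteq> m" shows "H n \<inter> H m = {}"
proof (rule ccontr)
  assume "H n \<inter> H m \<noteq> {}"
  then obtain z where z: "z \<in> H n" "z \<in> H m" by blast
  have "H n = H m"
  proof -
    obtain x where x: "H n = {y. E\<^sup>*\<^sup>* x y}" using H_def by blast
    obtain x' where x': "H m = {y. E\<^sup>*\<^sup>* x' y}" using H_def by blast
    have a: "E\<^sup>*\<^sup>* x z" "E\<^sup>*\<^sup>* x' z" using z x x' by auto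
    have b: "E\<^sup>*\<^sup>* z x" "E\<^sup>*\<^sup>* z x'" using a rt_sym by auto
    have c1: "E\<^sup>*\<^sup>* x' x" using a(2) b(1) by (rule rtranclp_trans)
    have c2: "E\<^sup>*\<^sup>* x x'" using a(1) b(2) by (rule rtranclp_trans)
    show ?thesis unfolding x x'
    proof (intro equalityI subsetI)
      fix y assume "y \<in> {y. E\<^sup>*\<^sup>* x y}"
      then show "y \<in> {y. E\<^sup>*\<^sup>* x' y}" using c1 by (simp add: rtranclp_trans[OF c1])
    next
      fix y assume "y \<in> {y. E\<^sup>*\<^sup>* x' y}"
      then show "y \<in> {y. E\<^sup>*\<^sup>* x y}" by (simp add: rtranclp_trans[OF c2])
    qed
  qed
  then show False using injH assms unfolding inj_def by blast
qed

lemma H_ne: "\<exists>x. x \<in> H n" using H_def[of n] by blast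

lemma H_nbr: assumes "v \<in> H n" shows "\<exists>w. E v w"
proof -
  obtain x where x: "x \<in> V" "H n = {y. E\<^sup>*\<^sup>* x y}" using H_def by blast
  have "H n \<noteq> {v}" using ntH[of n] unfolding trivial_set_def by blast
  then obtain w where w: "w \<in> H n" "w \<noteq> v" using assms by blast
  have "E\<^sup>*\<^sup>* x v" "E\<^sup>*\<^sup>* x w" using x w assms by auto
  then have "E\<^sup>*\<^sup>* v x" "E\<^sup>*\<^sup>* x w" using rt_sym by auto
  then have "E\<^sup>*\<^sup>* v w" by (rule rtranclp_trans)
  then show ?thesis
    by (rule converse_rtranclpE) (use w in auto)
qed

lemma notH_lt: assumes "w \<in> H j" "i < k" "k \<le> j" shows "w \<notin> H i"
proof
  assume "w \<in> H i"
  have "i \<noteq> j" using assms by simp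
  then have "H i \<inter> H j = {}" by (rule H_disj)
  then show False using assms \<open>w \<in> H i\<close> by blast
qed

definition I where "I = {v\<in>V. \<forall>w. \<not> E v w}"
definition p where "p n = (SOME x. x \<in> H n)"
lemma p_in: "p n \<in> H n" unfolding p_def using H_ne[of n] by (rule someI_ex)

lemma p_inj: "inj p"
proof (rule injI)
  fix i j assume "p i = p j"
  then have "p i \<in> H i \<inter> H j" using p_in[of i] p_in[of j] by simp
  then show "i = j" using H_disj[of i j] by blast
qed

definition phi where "phi n m = (SOME f. inj_on f (H n) \<and> f ` H n \<subseteq> H m \<and> (\<forall>x\<in>H n. \<forall>y\<in>H n. E (f x) (f y) = E x y))"

lemma phi: "n \<le> m \<Longrightarrow> inj_on (phi n m) (H n) \<and> phi n m ` H n \<subseteq> H m \<and> (\<forall>x\<in>H n. \<forall>y\<in>H n. E (phi n m x) (phi n m y) = E x y)"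
  unfolding phi_def using embH[of n m] unfolding embeds_def by (rule someI_ex)

definition hn where "hn v = (THE n. v \<in> H n)"
lemma hn: assumes "v \<in> H n" shows "hn v = n"
  unfolding hn_def
proof (rule the_equality)
  show "v \<in> H n" by (rule assms)
next
  fix m assume "v \<in> H m"
  then show "m = n" using assms H_disj[of m n] by blast
qed

lemma I_notH: assumes "v \<in> I" shows "v \<notin> H n"
proof
  assume "v \<in> H n"
  then obtain w where "E v w" using H_nbr by blast
  then show False using assms unfolding I_def by blast
qed

lemma cI: "countable I"
proof -
  have "I \<subseteq> V" unfolding I_def by blast
  then show ?thesis using cV by (rule countable_subset)
qed

definition S where "S k = {v\<in>V. v \<notin> I \<and> (\<forall>i<k. v \<notin> H i)} \<union> p ` {..<k}"
definition eI where "eI = to_nat_on I"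
definition inU where "inU v = (\<exists>n. v \<in> H n)"
definition f where "f k v = (if v \<in> I then p (k + 2 * eI v) else if inU v then phi (hn v) (k + 2 * hn v + 1) v else v)"
definition loc where "loc k v = (if v \<in> I then Some (k + 2 * eI v) else if inU v then Some (k + 2 * hn v + 1) else None)"

lemma S_V: "S k \<subseteq> V" unfolding S_def using p_in H_V by blast
lemma cS: "countable (S k)" using S_V cV countable_subset by blast

lemma f_loc_Some: "loc k v = Some j \<Longrightarrow> f k v \<in> H j"
proof -
  assume a: "loc k v = Some j"
  show ?thesis
  proof (cases "v \<in> I")
    case True
    have "f k v = p (k + 2 * eI v)" using True unfolding f_def by simp
    moreover have "j = k + 2 * eI v" using True a unfolding loc_def by simp
    ultimately show ?thesis using p_in by simp
  next
    case False
    then have u: "inU v" using a unfolding loc_def by (auto split: if_splits)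
    then obtain n where n: "v \<in> H n" unfolding inU_def by blast
    then have "hn v = n" by (rule hn)
    then have hv: "hn v = n" .
    have j: "j = k+2*n+1" using a False u hv unfolding loc_def by simp
    have fv: "f k v = phi n (k+2*n+1) v" using False u hv unfolding f_def by simp
    have le: "n \<le> k+2*n+1" by simp
    have "phi n (k+2*n+1) ` H n \<subseteq> H (k+2*n+1)" using phi[OF le] by (rule conjunct1[OF conjunct2])
    then show ?thesis using n fv j by blast
  qed
qed

lemma f_loc_None: assumes "loc k v = None" shows "f k v = v \<and> (\<forall>n. v \<notin> H n) \<and> v \<notin> I"
proof -
  have a: "v \<notin> I" using assms unfolding loc_def by (cases "v \<in> I") simp_all
  then have b: "\<not> inU v" using assms unfolding loc_def by (cases "inU v") simp_all
  have "f k v = v" using a b unfolding f_def by simp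
  then show ?thesis using a b unfolding inU_def by blast
qed

lemma loc_ge: "loc k v = Some j \<Longrightarrow> j \<ge> k"
  unfolding loc_def by (cases "v \<in> I"; cases "inU v") auto

lemma noedge: assumes "x \<in> V" "y \<in> V" "loc k x \<noteq> loc k y" shows "\<not> E x y"
proof
  assume e: "E x y"
  have xI: "x \<notin> I" using e unfolding I_def by blast
  have yI: "y \<notin> I" using sym[OF e] unfolding I_def by blast
  show False
  proof (cases "inU x")
    case True
    then obtain n where n: "x \<in> H n" unfolding inU_def by blast
    then have "y \<in> H n" using H_edge e by blast
    then have "hn y = n" "inU y" using hn unfolding inU_def by blast+
    moreover have "hn x = n" using hn n by blast
    ultimately have "loc k x = loc k y" using xI yI True unfolding loc_def by simp
    then show False using assms by blast
  next
    case False
    have "\<not> inU y" using False H_edge2 e unfolding inU_def by blast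
    then have "loc k x = loc k y" using False xI yI unfolding loc_def by simp
    then show False using assms by blast
  qed
qed

lemma diff_img: assumes "loc k x \<noteq> loc k y" shows "f k x \<noteq> f k y \<and> \<not> E (f k x) (f k y)"
proof (cases "loc k x")
  case None
  then obtain j where j: "loc k y = Some j" using assms by (cases "loc k y") simp_all
  have fj: "f k y \<in> H j" using f_loc_Some[OF j] .
  have nx: "f k x \<notin> H j" using f_loc_None[OF None] by simp
  have "\<not> E (f k x) (f k y)"
  proof
    assume "E (f k x) (f k y)"
    then have "f k x \<in> H j" by (rule H_edge2[OF fj])
    then show False using nx by blast
  qed
  moreover have "f k x \<noteq> f k y"
  proof
    assume "f k x = f k y"
    then show False using fj nx by simp
  qed
  ultimately show ?thesis by blast
next
  case (Some i)
  have fi: "f k x \<in> H i" using f_loc_Some[OF Some] .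
  show ?thesis
  proof (cases "loc k y")
    case None
    have ny: "f k y \<notin> H i" using f_loc_None[OF None] by simp
    have "\<not> E (f k x) (f k y)"
    proof
      assume "E (f k x) (f k y)"
      then have "f k y \<in> H i" by (rule H_edge[OF fi])
      then show False using ny by blast
    qed
    moreover have "f k x \<noteq> f k y"
    proof
      assume "f k x = f k y"
      then show False using fi ny by simp
    qed
    ultimately show ?thesis by blast
  next
    case (Some j)
    then have "i \<noteq> j" using assms \<open>loc k x = Some i\<close> by simp
    then have d: "H i \<inter> H j = {}" by (rule H_disj)
    have fj: "f k y \<in> H j" using f_loc_Some[OF Some] .
    have "\<not> E (f k x) (f k y)"
    proof
      assume "E (f k x) (f k y)"
      then have "f k y \<in> H i" by (rule H_edge[OF fi])
      then show False using d fj by blast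
    qed
    moreover have "f k x \<noteq> f k y"
    proof
      assume "f k x = f k y"
      then have "f k y \<in> H i" using fi by simp
      then show False using d fj by blast
    qed
    ultimately show ?thesis by blast
  qed
qed

lemma same_img: assumes "x \<in> V" "y \<in> V" "loc k x = loc k y"
  shows "(f k x = f k y \<longleftrightarrow> x = y) \<and> (E (f k x) (f k y) = E x y)"
proof (cases "loc k x")
  case None
  then have "loc k y = None" using assms by simp
  then show ?thesis using None f_loc_None by simp
next
  case (Some j)
  show ?thesis
  proof (cases "x \<in> I")
    case True
    have yI: "y \<in> I"
    proof (rule ccontr)
      assume yn: "y \<notin> I"
      have lx: "loc k x = Some (k + 2*eI x)" using True unfolding loc_def by simp
      show False
      proof (cases "inU y")
        case True
        then have "loc k y = Some (k + 2*hn y + 1)" using yn unfolding loc_def by simp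
        then have "k + 2*eI x = k + 2*hn y + 1" using lx assms(3) by simp
        then show False by presburger
      next
        case False
        then have "loc k y = None" using yn unfolding loc_def by simp
        then show False using lx assms(3) by simp
      qed
    qed
    then have "eI x = eI y" using assms True unfolding loc_def by auto
    moreover have "inj_on eI I" unfolding eI_def using cI by (rule inj_on_to_nat_on)
    ultimately have "x = y" using True yI by (meson inj_onD)
    then show ?thesis by (simp add: irr)
  next
    case False
    then have ux: "inU x" using Some unfolding loc_def by (auto split: if_splits)
    then obtain n where n: "x \<in> H n" unfolding inU_def by blast
    have yI: "y \<notin> I"
    proof
      assume yi: "y \<in> I"
      have "loc k x = Some (k + 2*hn x + 1)" using False ux unfolding loc_def by simp
      moreover have "loc k y = Some (k + 2*eI y)" using yi unfolding loc_def by simp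
      ultimately have "k + 2*eI y = k + 2*hn x + 1" using assms(3) by simp
      then show False by presburger
    qed
    then have uy: "inU y" using Some assms unfolding loc_def by (auto split: if_splits)
    then obtain m where m: "y \<in> H m" unfolding inU_def by blast
    have "n = m" using assms False yI ux uy hn[OF n] hn[OF m] unfolding loc_def by auto
    then have fx: "f k x = phi n (k+2*n+1) x" and fy: "f k y = phi n (k+2*n+1) y"
      using False yI ux uy hn[OF n] hn[OF m] unfolding f_def by auto
    have P: "inj_on (phi n (k+2*n+1)) (H n) \<and> (\<forall>x\<in>H n. \<forall>y\<in>H n. E (phi n (k+2*n+1) x) (phi n (k+2*n+1) y) = E x y)"
      using phi[of n "k+2*n+1"] by simp
    show ?thesis unfolding fx fy using P n m \<open>n = m\<close> unfolding inj_on_def by blast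
  qed
qed

lemma f_emb: "inj_on (f k) V \<and> f k ` V \<subseteq> S k \<and> (\<forall>x\<in>V. \<forall>y\<in>V. E (f k x) (f k y) = E x y)"
proof (intro conjI)
  show "inj_on (f k) V"
  proof (rule inj_onI)
    fix x y assume xy: "x \<in> V" "y \<in> V" "f k x = f k y"
    show "x = y"
    proof (cases "loc k x = loc k y")
      case True then show ?thesis using same_img[OF xy(1,2) True] xy(3) by blast
    next
      case False then show ?thesis using diff_img[OF False] xy(3) by blast
    qed
  qed
  show "\<forall>x\<in>V. \<forall>y\<in>V. E (f k x) (f k y) = E x y"
  proof (intro ballI)
    fix x y assume xy: "x \<in> V" "y \<in> V"
    show "E (f k x) (f k y) = E x y"
    proof (cases "loc k x = loc k y")
      case True then show ?thesis using same_img[OF xy True] by blast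
    next
      case False then show ?thesis using diff_img[OF False] noedge[OF xy False] by blast
    qed
  qed
  show "f k ` V \<subseteq> S k"
  proof
    fix w assume "w \<in> f k ` V"
    then obtain v where v: "v \<in> V" "w = f k v" by blast
    show "w \<in> S k"
    proof (cases "loc k v")
      case None
      have "w = v" "\<forall>n. v \<notin> H n" "v \<notin> I" using f_loc_None[OF None] v by auto
      then have "w \<in> {v\<in>V. v \<notin> I \<and> (\<forall>i<k. v \<notin> H i)}" using v by blast
      then show ?thesis unfolding S_def by (rule UnI1)
    next
      case (Some j)
      have w: "w \<in> H j" using f_loc_Some[OF Some] v by simp
      have "j \<ge> k" using loc_ge[OF Some] .
      then have "\<forall>i<k. w \<notin> H i" using w notH_lt by blast
      moreover have "w \<notin> I" using w I_notH by blast
      moreover have "w \<in> V" using w H_V by blast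
      ultimately show ?thesis unfolding S_def by blast
    qed
  qed
qed

lemma iso_S: "{v\<in>S k. \<forall>w\<in>S k. \<not> E v w} = p ` {..<k}"
proof
  show "p ` {..<k} \<subseteq> {v\<in>S k. \<forall>w\<in>S k. \<not> E v w}"
  proof
    fix v assume "v \<in> p ` {..<k}"
    then obtain i where i: "i < k" "v = p i" by blast
    have "\<forall>w\<in>S k. \<not> E v w"
    proof (intro ballI notI)
      fix w assume w: "w \<in> S k" and e: "E v w"
      have wH: "w \<in> H i" using e i p_in H_edge by blast
      show False
      proof (cases "w \<in> p ` {..<k}")
        case True
        then obtain j where "w = p j" by blast
        have "j = i"
        proof (rule ccontr)
          assume "j \<noteq> i"
          then have "H j \<inter> H i = {}" by (rule H_disj)
          then show False using wH p_in[of j] \<open>w = p j\<close> by blast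
        qed
        then show False using e i \<open>w = p j\<close> irr by simp
      next
        case False
        then show False using w wH i unfolding S_def by blast
      qed
    qed
    then show "v \<in> {v\<in>S k. \<forall>w\<in>S k. \<not> E v w}" using i unfolding S_def by blast
  qed
next
  show "{v\<in>S k. \<forall>w\<in>S k. \<not> E v w} \<subseteq> p ` {..<k}"
  proof
    fix v assume v: "v \<in> {v\<in>S k. \<forall>w\<in>S k. \<not> E v w}"
    show "v \<in> p ` {..<k}"
    proof (rule ccontr)
      assume nv: "v \<notin> p ` {..<k}"
      then have vS: "v \<in> V" "v \<notin> I" "\<forall>i<k. v \<notin> H i" using v unfolding S_def by auto
      then obtain w where e: "E v w" unfolding I_def by blast
      have "w \<in> V" using inV e by blast
      moreover have "w \<notin> I" using sym[OF e] unfolding I_def by blast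
      moreover have "\<forall>i<k. w \<notin> H i" using vS(3) H_edge2 e by blast
      ultimately have "w \<in> S k" unfolding S_def by blast
      then show False using v e by blast
    qed
  qed
qed

definition N where "N k = to_nat_on (S k) ` S k"
definition EN where "EN k a b = (a \<in> N k \<and> b \<in> N k \<and> E (from_nat_into (S k) a) (from_nat_into (S k) b))"

lemma graphN: "graph (N k) (EN k)"
  unfolding graph_def EN_def using sym irr by blast

lemma EN_rt: "(EN k)\<^sup>*\<^sup>* a b \<Longrightarrow> E\<^sup>*\<^sup>* (from_nat_into (S k) a) (from_nat_into (S k) b)"
proof (induction rule: rtranclp_induct)
  case base then show ?case by simp
next
  case (step b c)
  then show ?case unfolding EN_def by (meson rtranclp.rtrancl_into_rtrancl)
qed

lemma bkk: "x \<in> S k \<Longrightarrow> from_nat_into (S k) (to_nat_on (S k) x) = x"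
  using cS by simp

lemma p_S: "i \<ge> k \<Longrightarrow> p i \<in> S k"
proof -
  assume "i \<ge> k"
  then have "\<forall>j<k. p i \<notin> H j" using p_in notH_lt by blast
  moreover have "p i \<notin> I" using p_in I_notH by blast
  moreover have "p i \<in> V" using p_in H_V by blast
  ultimately show ?thesis unfolding S_def by blast
qed

lemma disconnN: "disconnected (N k) (EN k)"
proof -
  let ?g = "to_nat_on (S k)"
  have a: "p k \<in> S k" "p (Suc k) \<in> S k" using p_S by auto
  have "\<not> (EN k)\<^sup>*\<^sup>* (?g (p k)) (?g (p (Suc k)))"
  proof
    assume "(EN k)\<^sup>*\<^sup>* (?g (p k)) (?g (p (Suc k)))"
    then have "E\<^sup>*\<^sup>* (from_nat_into (S k) (?g (p k))) (from_nat_into (S k) (?g (p (Suc k))))"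
      by (rule EN_rt)
    then have "E\<^sup>*\<^sup>* (p k) (p (Suc k))" using bkk[OF a(1)] bkk[OF a(2)] by simp
    then have "p (Suc k) \<in> H k" by (rule H_closed[OF p_in])
    moreover have "H k \<inter> H (Suc k) = {}" using H_disj[of k "Suc k"] by simp
    ultimately show False using p_in[of "Suc k"] by blast
  qed
  moreover have "?g (p k) \<in> N k" "?g (p (Suc k)) \<in> N k" unfolding N_def using a by blast+
  ultimately show ?thesis unfolding disconnected_def by blast
qed

lemma equiN: "equimorphic (N k) (EN k) V E"
  unfolding equimorphic_def
proof
  show "embeds (N k) (EN k) V E"
    unfolding embeds_def
  proof (intro exI[of _ "from_nat_into (S k)"] conjI)
    show "inj_on (from_nat_into (S k)) (N k)"
    proof (rule inj_onI)
      fix a b assume ab: "a \<in> N k" "b \<in> N k" "from_nat_into (S k) a = from_nat_into (S k) b"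
      obtain x where x: "x \<in> S k" "a = to_nat_on (S k) x" using ab(1) unfolding N_def by blast
      obtain y where y: "y \<in> S k" "b = to_nat_on (S k) y" using ab(2) unfolding N_def by blast
      have "x = y" using ab(3) unfolding x(2) y(2) bkk[OF x(1)] bkk[OF y(1)] .
      then show "a = b" using x y by simp
    qed
    show "from_nat_into (S k) ` N k \<subseteq> V"
    proof
      fix a assume "a \<in> from_nat_into (S k) ` N k"
      then obtain x where x: "x \<in> S k" "a = from_nat_into (S k) (to_nat_on (S k) x)"
        unfolding N_def by blast
      then have "a = x" using bkk[OF x(1)] by simp
      then show "a \<in> V" using x S_V by blast
    qed
    show "\<forall>x\<in>N k. \<forall>y\<in>N k. E (from_nat_into (S k) x) (from_nat_into (S k) y) = EN k x y"
      unfolding EN_def by auto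
  qed
next
  show "embeds V E (N k) (EN k)"
    unfolding embeds_def
  proof (intro exI[of _ "to_nat_on (S k) \<circ> f k"] conjI)
    note fe0 = f_emb[of k]
    have fe: "inj_on (f k) V" "f k ` V \<subseteq> S k" "\<forall>x\<in>V. \<forall>y\<in>V. E (f k x) (f k y) = E x y"
      using conjunct1[OF fe0] conjunct1[OF conjunct2[OF fe0]] conjunct2[OF conjunct2[OF fe0]] by this+
    show "inj_on (to_nat_on (S k) \<circ> f k) V"
      by (rule comp_inj_on[OF fe(1) inj_on_subset[OF inj_on_to_nat_on[OF cS] fe(2)]])
    show "(to_nat_on (S k) \<circ> f k) ` V \<subseteq> N k"
    proof
      fix a assume "a \<in> (to_nat_on (S k) \<circ> f k) ` V"
      then obtain x where x: "x \<in> V" "a = to_nat_on (S k) (f k x)" by auto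
      then have "f k x \<in> S k" using fe by blast
      then show "a \<in> N k" unfolding N_def x(2) by (rule imageI)
    qed
    show "\<forall>x\<in>V. \<forall>y\<in>V. EN k ((to_nat_on (S k) \<circ> f k) x) ((to_nat_on (S k) \<circ> f k) y) = E x y"
    proof (intro ballI)
      fix x y assume xy: "x \<in> V" "y \<in> V"
      have a: "f k x \<in> S k" "f k y \<in> S k" using fe xy by blast+
      then have "to_nat_on (S k) (f k x) \<in> N k" "to_nat_on (S k) (f k y) \<in> N k"
        unfolding N_def by blast+
      then show "EN k ((to_nat_on (S k) \<circ> f k) x) ((to_nat_on (S k) \<circ> f k) y) = E x y"
        unfolding EN_def using bkk[OF a(1)] bkk[OF a(2)] fe xy by simp
    qed
  qed
qed

lemma isoN: "{a\<in>N k. \<forall>b\<in>N k. \<not> EN k a b} = to_nat_on (S k) ` {v\<in>S k. \<forall>w\<in>S k. \<not> E v w}"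
proof
  show "{a\<in>N k. \<forall>b\<in>N k. \<not> EN k a b} \<subseteq> to_nat_on (S k) ` {v\<in>S k. \<forall>w\<in>S k. \<not> E v w}"
  proof
    fix a assume a: "a \<in> {a\<in>N k. \<forall>b\<in>N k. \<not> EN k a b}"
    then obtain x where x: "x \<in> S k" "a = to_nat_on (S k) x" unfolding N_def by blast
    have "\<forall>w\<in>S k. \<not> E x w"
    proof (intro ballI notI)
      fix w assume w: "w \<in> S k" "E x w"
      have "to_nat_on (S k) w \<in> N k" using w unfolding N_def by blast
      then have "EN k a (to_nat_on (S k) w)" using a w x bkk unfolding EN_def by simp
      then show False using a \<open>to_nat_on (S k) w \<in> N k\<close> by blast
    qed
    then show "a \<in> to_nat_on (S k) ` {v\<in>S k. \<forall>w\<in>S k. \<not> E v w}" using x by blast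
  qed
next
  show "to_nat_on (S k) ` {v\<in>S k. \<forall>w\<in>S k. \<not> E v w} \<subseteq> {a\<in>N k. \<forall>b\<in>N k. \<not> EN k a b}"
  proof
    fix a assume "a \<in> to_nat_on (S k) ` {v\<in>S k. \<forall>w\<in>S k. \<not> E v w}"
    then obtain x where x: "x \<in> S k" "\<forall>w\<in>S k. \<not> E x w" "a = to_nat_on (S k) x" by blast
    have aN: "a \<in> N k" using x unfolding N_def by blast
    have "\<forall>b\<in>N k. \<not> EN k a b"
    proof (intro ballI notI)
      fix b assume b: "b \<in> N k" "EN k a b"
      then obtain w where w: "w \<in> S k" "b = to_nat_on (S k) w" unfolding N_def by blast
      have "E x w" using b(2) unfolding EN_def w(2) x(3) using bkk[OF x(1)] bkk[OF w(1)] by simp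
      then show False using x w by blast
    qed
    then show "a \<in> {a\<in>N k. \<forall>b\<in>N k. \<not> EN k a b}" using aN by blast
  qed
qed

lemma cardN: "card {a\<in>N k. \<forall>b\<in>N k. \<not> EN k a b} = k"
proof -
  have "inj_on (to_nat_on (S k)) (p ` {..<k})"
  proof -
    have "p ` {..<k} \<subseteq> S k" using iso_S by blast
    then show ?thesis using inj_on_to_nat_on[OF cS] inj_on_subset by blast
  qed
  moreover have "card (p ` {..<k}) = k"
    using p_inj by (simp add: card_image inj_on_subset)
  ultimately show ?thesis unfolding isoN iso_S by (simp add: card_image)
qed

end

theorem lemma2p3:
  fixes V :: "'a set" and E :: "'a \<Rightarrow> 'a \<Rightarrow> bool" and H :: "nat \<Rightarrow> 'a set"
  assumes "graph V E" and "countable V" and "disconnected V E"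
    and "inj H"
    and "\<And>n. component V E (H n)" and "\<And>n. \<not> trivial_set (H n)"
    and "\<And>n m. n \<le> m \<Longrightarrow> embeds (H n) E (H m) E"
  shows "\<exists>S :: nat \<Rightarrow> nat set \<times> (nat \<Rightarrow> nat \<Rightarrow> bool).
           (\<forall>i. graph (fst (S i)) (snd (S i)) \<and> disconnected (fst (S i)) (snd (S i))
                 \<and> equimorphic (fst (S i)) (snd (S i)) V E)
         \<and> (\<forall>i j. i \<noteq> j \<longrightarrow> \<not> isomorphic (fst (S i)) (snd (S i)) (fst (S j)) (snd (S j)))"
proof -
  interpret L: sibctx V E H using assms by unfold_locales auto
  show ?thesis
  proof (intro exI[of _ "\<lambda>k. (L.N k, L.EN k)"] conjI allI impI)
    fix i show "graph (fst (L.N i, L.EN i)) (snd (L.N i, L.EN i))" using L.graphN by simp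
    show "disconnected (fst (L.N i, L.EN i)) (snd (L.N i, L.EN i))" using L.disconnN by simp
    show "equimorphic (fst (L.N i, L.EN i)) (snd (L.N i, L.EN i)) V E" using L.equiN by simp
  next
    fix i j :: nat assume "i \<noteq> j"
    then show "\<not> isomorphic (fst (L.N i, L.EN i)) (snd (L.N i, L.EN i)) (fst (L.N j, L.EN j)) (snd (L.N j, L.EN j))"
      using iso_card[of "L.N i" "L.EN i" "L.N j" "L.EN j"] L.cardN by auto
  qed
qed

end
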